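(* Let $T_1=(V,E_1)$ and $T_2=(V,E_2)$ be trees on the common vertex set $V=\{1,\dots,n\}$. Suppose there are orderings $\pi_1=(\tau_1,\dots,\tau_{n-1})$ of $E_1$ and $\pi_2=(\sigma_1,\dots,\sigma_{n-1})$ of $E_2$ such that $\mathcal{K}_{\pi_1}(T_1)=\mathcal{K}_{\pi_2}(T_2)$ in $\mathbb{C}[S_n]$. Then $E_1=E_2$ (so $T_1=T_2$). Moreover, whenever two distinct edges $(i,j)$ and $(j,k)$ share the endpoint $j$ and $(i,j)$ precedes $(j,k)$ in $\pi_1$, then $(i,j)$ also precedes $(j,k)$ in $\pi_2$.
   Context: $\mathbb{C}[S_n]$ is the group algebra of the symmetric group $S_n$; an edge $(i,j)$ is identified with the transposition $(i\,j)\in S_n$. For a graph $G$ with vertex set labeled by $\{1,\dots,n\}$ and an ordering $\pi=(e_1,\dots,e_m)$ of its edges, $\mathcal{K}_\pi(G)=n!\,(1-e_1)(1-e_2)\cdots(1-e_m)\in\mathbb{C}[S_n]$, the product taken in the order given by $\pi$ (here $1$ is the identity permutation). *)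

theory Defs
  imports Complex_Main "HOL-Combinatorics.Permutations"
begin

text \<open>Elements of the group algebra C[S_n] are represented as complex-valued
functions on permutations of {1..n} (functions nat => nat), set to 0 outside S_n.
The product of permutations sigma tau is composition sigma o tau.\<close>

type_synonym galg = "(nat \<Rightarrow> nat) \<Rightarrow> complex"

definition Sn :: "nat \<Rightarrow> (nat \<Rightarrow> nat) set" where
  "Sn n = {p. p permutes {1..n}}"

definition ga_basis :: "nat \<Rightarrow> (nat \<Rightarrow> nat) \<Rightarrow> galg" where
  "ga_basis n p = (\<lambda>s. if s \<in> Sn n \<and> s = p then 1 else 0)"

definition ga_one :: "nat \<Rightarrow> galg" where
  "ga_one n = ga_basis n id"

definition ga_mult :: "nat \<Rightarrow> galg \<Rightarrow> galg \<Rightarrow> galg" where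
  "ga_mult n f g = (\<lambda>s. if s \<in> Sn n then (\<Sum>t\<in>Sn n. f t * g (inv t \<circ> s)) else 0)"

definition ga_diff :: "galg \<Rightarrow> galg \<Rightarrow> galg" where
  "ga_diff f g = (\<lambda>s. f s - g s)"

definition ga_scale :: "complex \<Rightarrow> galg \<Rightarrow> galg" where
  "ga_scale c f = (\<lambda>s. c * f s)"

definition edge_transp :: "nat set \<Rightarrow> (nat \<Rightarrow> nat)" where
  "edge_transp e = Transposition.transpose (Min e) (Max e)"

definition Kpi :: "nat \<Rightarrow> nat set list \<Rightarrow> galg" where
  "Kpi n es = ga_scale (of_nat (fact n))
     (foldr (\<lambda>e acc. ga_mult n (ga_diff (ga_one n) (ga_basis n (edge_transp e))) acc) es (ga_one n))"

definition is_graph :: "nat \<Rightarrow> nat set set \<Rightarrow> bool" where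
  "is_graph n E \<longleftrightarrow> (\<forall>e\<in>E. \<exists>i j. e = {i, j} \<and> i \<noteq> j \<and> i \<in> {1..n} \<and> j \<in> {1..n})"

definition adj_rel :: "nat set set \<Rightarrow> (nat \<times> nat) set" where
  "adj_rel E = {(u, v). {u, v} \<in> E}"

definition connected_graph :: "nat \<Rightarrow> nat set set \<Rightarrow> bool" where
  "connected_graph n E \<longleftrightarrow> (\<forall>u\<in>{1..n}. \<forall>v\<in>{1..n}. (u, v) \<in> (adj_rel E)\<^sup>*)"

definition has_cycle :: "nat set set \<Rightarrow> bool" where
  "has_cycle E \<longleftrightarrow> (\<exists>cs. length cs \<ge> 3 \<and> distinct cs \<and>
      (\<forall>i < length cs. {cs ! i, cs ! ((i + 1) mod length cs)} \<in> E))"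

definition is_tree :: "nat \<Rightarrow> nat set set \<Rightarrow> bool" where
  "is_tree n E \<longleftrightarrow> is_graph n E \<and> connected_graph n E \<and> \<not> has_cycle E"

definition edge_ordering :: "nat set set \<Rightarrow> nat set list \<Rightarrow> bool" where
  "edge_ordering E \<pi> \<longleftrightarrow> distinct \<pi> \<and> set \<pi> = E"

definition precedes :: "'a \<Rightarrow> 'a \<Rightarrow> 'a list \<Rightarrow> bool" where
  "precedes a b xs \<longleftrightarrow> (\<exists>p q. p < q \<and> q < length xs \<and> xs ! p = a \<and> xs ! q = b)"

end

theory Submission
  imports Defs
begin

definition prodT :: "nat set list \<Rightarrow> (nat \<Rightarrow> nat)" where
  "prodT S = foldr (\<lambda>e p. edge_transp e \<circ> p) S id"

definition coef :: "nat set list \<Rightarrow> (nat \<Rightarrow> nat) \<Rightarrow> complex" where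
  "coef \<pi> s = sum_list (map (\<lambda>S. if s = prodT S then (-1::complex)^length S else 0) (subseqs \<pi>))"

lemma sum_list_neg_map: "sum_list (map (\<lambda>x. - f x) xs) = - sum_list (map f (xs::_ list)) " for f :: "_ \<Rightarrow> complex"
  by (induction xs) auto

lemma coef_Cons:
  assumes "edge_transp e \<circ> edge_transp e = id"
  shows "coef (e#\<pi>) s = coef \<pi> s - coef \<pi> (edge_transp e \<circ> s)"
proof -
  let ?t = "edge_transp e"
  have eq: "(s = ?t \<circ> P) \<longleftrightarrow> (?t \<circ> s = P)" for P
    by (metis assms comp_assoc id_comp)
  have "coef (e#\<pi>) s = sum_list (map (\<lambda>S. if s = prodT (e#S) then (-1::complex)^length (e#S) else 0) (subseqs \<pi>))
     + coef \<pi> s"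
    by (simp add: coef_def Let_def o_def)
  also have "sum_list (map (\<lambda>S. if s = prodT (e#S) then (-1::complex)^length (e#S) else 0) (subseqs \<pi>))
     = sum_list (map (\<lambda>S. - (if ?t \<circ> s = prodT S then (-1::complex)^length S else 0)) (subseqs \<pi>))"
    by (rule arg_cong[where f=sum_list], rule map_cong, simp_all add: prodT_def eq)
  also have "\<dots> = - coef \<pi> (?t \<circ> s)" by (simp add: sum_list_neg_map coef_def)
  finally show ?thesis by simp
qed

lemma finite_Sn: "finite (Sn n)"
  unfolding Sn_def using finite_permutations[of "{1..n}"] by simp

lemma id_Sn: "id \<in> Sn n" by (simp add: Sn_def permutes_id)

lemma mult_basis:
  assumes "t \<in> Sn n" "s \<in> Sn n"
  shows "(\<Sum>u\<in>Sn n. ga_basis n t u * F (inv u \<circ> s)) = F (inv t \<circ> s)"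
proof -
  have "(\<Sum>u\<in>Sn n. ga_basis n t u * F (inv u \<circ> s)) = (\<Sum>u\<in>Sn n. if u = t then F (inv u \<circ> s) else 0)"
    by (rule sum.cong) (auto simp: ga_basis_def)
  also have "\<dots> = F (inv t \<circ> s)" using assms finite_Sn by (simp add: sum.delta')
  finally show ?thesis .
qed

lemma ga_expand:
  assumes "\<forall>e\<in>set \<pi>. edge_transp e \<in> Sn n \<and> edge_transp e \<circ> edge_transp e = id"
  shows "foldr (\<lambda>e acc. ga_mult n (ga_diff (ga_one n) (ga_basis n (edge_transp e))) acc) \<pi> (ga_one n)
    = (\<lambda>s. if s \<in> Sn n then coef \<pi> s else 0)"
  using assms
proof (induction \<pi>)
  case Nil
  show ?case by (auto simp: ga_one_def ga_basis_def coef_def prodT_def fun_eq_iff)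
next
  case (Cons e \<pi>)
  let ?t = "edge_transp e"
  let ?F = "\<lambda>s. if s \<in> Sn n then coef \<pi> s else 0"
  have t: "?t \<in> Sn n" "?t \<circ> ?t = id" using Cons.prems by (meson list.set_intros(1))+
  have invt: "inv ?t = ?t" using t(2) by (simp add: inv_unique_comp)
  have IH: "foldr (\<lambda>e acc. ga_mult n (ga_diff (ga_one n) (ga_basis n (edge_transp e))) acc) \<pi> (ga_one n) = ?F"
    using Cons by auto
  show ?case
  proof (rule ext)
    fix s
    show "foldr (\<lambda>e acc. ga_mult n (ga_diff (ga_one n) (ga_basis n (edge_transp e))) acc) (e#\<pi>) (ga_one n) s
      = (if s \<in> Sn n then coef (e#\<pi>) s else 0)"
    proof (cases "s \<in> Sn n")
      case False thus ?thesis by (simp add: ga_mult_def)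
    next
      case True
      have ts: "?t \<circ> s \<in> Sn n" using t(1) True by (simp add: Sn_def permutes_compose)
      have "foldr (\<lambda>e acc. ga_mult n (ga_diff (ga_one n) (ga_basis n (edge_transp e))) acc) (e#\<pi>) (ga_one n) s
         = (\<Sum>u\<in>Sn n. ga_basis n id u * ?F (inv u \<circ> s) - ga_basis n ?t u * ?F (inv u \<circ> s))"
      proof -
        have "foldr (\<lambda>e acc. ga_mult n (ga_diff (ga_one n) (ga_basis n (edge_transp e))) acc) (e#\<pi>) (ga_one n)
           = ga_mult n (ga_diff (ga_one n) (ga_basis n ?t)) ?F" using IH by simp
        then show ?thesis using True by (simp add: ga_mult_def ga_diff_def ga_one_def algebra_simps)
      qed
      also have "\<dots> = ?F (inv id \<circ> s) - ?F (inv ?t \<circ> s)"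
        unfolding sum_subtractf using mult_basis[OF id_Sn True, where F="?F"] mult_basis[OF t(1) True, where F="?F"]
        by presburger
      also have "\<dots> = coef \<pi> s - coef \<pi> (?t \<circ> s)" using True ts invt by simp
      also have "\<dots> = coef (e#\<pi>) s" using coef_Cons[OF t(2)] by simp
      finally show ?thesis using True by simp
    qed
  qed
qed


fun chain :: "nat set set \<Rightarrow> nat list \<Rightarrow> bool" where
  "chain F [] = True"
| "chain F [x] = True"
| "chain F (x#y#xs) = ({x,y} \<in> F \<and> chain F (y#xs))"

lemma chain_snoc: "chain F xs \<Longrightarrow> xs \<noteq> [] \<Longrightarrow> {last xs, z} \<in> F \<Longrightarrow> chain F (xs@[z])"
  by (induction F xs rule: chain.induct) auto

lemma chain_append: "chain F (xs @ y # ys) \<longleftrightarrow> chain F (xs@[y]) \<and> chain F (y#ys)"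
proof (induction xs)
  case Nil then show ?case by simp
next
  case (Cons x xs) then show ?case by (cases xs) auto
qed

lemma chain_nth: "chain F xs \<Longrightarrow> Suc i < length xs \<Longrightarrow> {xs!i, xs!Suc i} \<in> F"
proof (induction F xs arbitrary: i rule: chain.induct)
  case (3 F x y xs) then show ?case by (cases i) auto
qed auto

lemma rtrancl_chain:
  assumes "(a,b) \<in> (adj_rel F)\<^sup>*"
  shows "\<exists>xs. chain F xs \<and> xs \<noteq> [] \<and> hd xs = a \<and> last xs = b"
  using assms
proof (induction rule: rtrancl_induct)
  case base
  then show ?case by (intro exI[of _ "[a]"]) auto
next
  case (step y z)
  then obtain xs where xs: "chain F xs" "xs \<noteq> []" "hd xs = a" "last xs = y" by blast
  have "{y,z} \<in> F" using step(2) by (simp add: adj_rel_def)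
  then have "chain F (xs@[z])" using chain_snoc xs by auto
  then show ?case using xs by (intro exI[of _ "xs@[z]"]) auto
qed

lemma chain_distinct:
  "chain F xs \<Longrightarrow> xs \<noteq> [] \<Longrightarrow> \<exists>ys. chain F ys \<and> ys \<noteq> [] \<and> distinct ys \<and> hd ys = hd xs \<and> last ys = last xs"
proof (induction "length xs" arbitrary: xs rule: less_induct)
  case less
  show ?case
  proof (cases "distinct xs")
    case True then show ?thesis using less.prems by blast
  next
    case False
    then obtain us y vs ws where d: "xs = us @ [y] @ vs @ [y] @ ws" using not_distinct_decomp by blast
    let ?zs = "us @ y # ws"
    have c1: "chain F (us@[y])" "chain F (y # vs @ y # ws)" using less.prems(1) d chain_append[of F us y "vs @ [y] @ ws"] by auto
    have c2: "chain F (y#ws)" using c1(2) chain_append[of F "y#vs" y ws] by auto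
    have cz: "chain F ?zs" using c1 c2 chain_append by blast
    have len: "length ?zs < length xs" using d by simp
    have hd: "hd ?zs = hd xs" using d by (cases us) auto
    have lst: "last ?zs = last xs" using d by (cases ws) auto
    show ?thesis using less.hyps[OF len cz] hd lst by auto
  qed
qed

lemma no_path:
  assumes "\<not> has_cycle E" "F \<subseteq> E" "{a,b} \<in> E" "{a,b} \<notin> F" "a \<noteq> b"
  shows "(a,b) \<notin> (adj_rel F)\<^sup>*"
proof
  assume "(a,b) \<in> (adj_rel F)\<^sup>*"
  then obtain xs where "chain F xs" "xs \<noteq> []" "hd xs = a" "last xs = b" using rtrancl_chain by blast
  then obtain ys where ys: "chain F ys" "ys \<noteq> []" "distinct ys" "hd ys = a" "last ys = b"
    using chain_distinct by metis
  have l2: "length ys \<ge> 2"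
  proof (rule ccontr)
    assume "\<not> 2 \<le> length ys"
    then have "length ys = 1" using ys(2) by (cases ys) (auto simp: Suc_le_eq)
    then obtain x where "ys = [x]" by (cases ys) auto
    then show False using ys assms(5) by simp
  qed
  have l3: "length ys \<ge> 3"
  proof (rule ccontr)
    assume "\<not> 3 \<le> length ys"
    then have "length ys = 2" using l2 by simp
    then obtain x y where "ys = [x,y]" by (cases ys; cases "tl ys") auto
    then show False using ys assms(4) by simp
  qed
  have "\<forall>i < length ys. {ys ! i, ys ! ((i + 1) mod length ys)} \<in> E"
  proof (intro allI impI)
    fix i assume i: "i < length ys"
    show "{ys ! i, ys ! ((i + 1) mod length ys)} \<in> E"
    proof (cases "Suc i < length ys")
      case True
      then show ?thesis using chain_nth[OF ys(1) True] assms(2) by auto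
    next
      case False
      then have "i = length ys - 1" using i by simp
      moreover have "ys ! (length ys - 1) = b" using ys(2,5) by (simp add: last_conv_nth)
      moreover have "ys ! 0 = a" using ys(2,4) by (simp add: hd_conv_nth)
      moreover have "(i+1) mod length ys = 0" using \<open>i = length ys - 1\<close> ys(2) by simp
      ultimately show ?thesis using assms(3) by (simp add: insert_commute)
    qed
  qed
  then have "has_cycle E" unfolding has_cycle_def using l3 ys(3) by blast
  then show False using assms(1) by simp
qed


lemma edge_transp_pair: "i \<noteq> j \<Longrightarrow> edge_transp {i,j} = Transposition.transpose i j"
  unfolding edge_transp_def
  by (cases "i < j") (auto simp: min_def max_def transpose_commute)

lemma graph_edge: "is_graph n E \<Longrightarrow> e \<in> E \<Longrightarrow> \<exists>a b. e = {a,b} \<and> a\<noteq>b \<and> a\<in>{1..n} \<and> b\<in>{1..n}"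
  unfolding is_graph_def by blast

lemma adj_rel_sym: "(b,a) \<in> (adj_rel F)\<^sup>* \<Longrightarrow> (a,b) \<in> (adj_rel F)\<^sup>*"
proof -
  have "sym (adj_rel F)" by (auto simp: sym_def adj_rel_def insert_commute)
  then have "sym ((adj_rel F)\<^sup>*)" by (rule sym_rtrancl)
  then show "(b,a) \<in> (adj_rel F)\<^sup>* \<Longrightarrow> (a,b) \<in> (adj_rel F)\<^sup>*" by (auto dest: symD)
qed

lemma invariant:
  assumes "is_graph n E" "\<not> has_cycle E" "distinct S" "set S \<subseteq> E"
  shows "{v. prodT S v \<noteq> v} = \<Union>(set S) \<and> (\<forall>v. (v, prodT S v) \<in> (adj_rel (set S))\<^sup>*)"
  using assms(3,4)
proof (induction S)
  case Nil then show ?case by (simp add: prodT_def)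
next
  case (Cons e S)
  let ?p = "prodT S"
  obtain a b where e: "e = {a,b}" "a \<noteq> b" using graph_edge[OF assms(1)] Cons.prems by force
  have IH: "{v. ?p v \<noteq> v} = \<Union>(set S)" "\<forall>v. (v, ?p v) \<in> (adj_rel (set S))\<^sup>*" using Cons by auto
  have np: "(a,b) \<notin> (adj_rel (set S))\<^sup>*"
    using no_path[OF assms(2), of "set S" a b] Cons.prems e by auto
  have pa: "?p a \<noteq> b" using IH(2) np by metis
  have pb: "?p b \<noteq> a" using IH(2) np adj_rel_sym by metis
  have P: "prodT (e#S) = Transposition.transpose a b \<circ> ?p"
    using e by (simp add: prodT_def edge_transp_pair)
  have mv: "prodT (e#S) v \<noteq> v \<longleftrightarrow> (v = a \<or> v = b \<or> ?p v \<noteq> v)" for v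
    using pa pb e(2) unfolding P by (auto simp: transpose_eq_iff)
  have A1: "{v. prodT (e#S) v \<noteq> v} = \<Union>(set (e#S))"
    using mv IH(1) e by auto
  have mono: "(adj_rel (set S))\<^sup>* \<subseteq> (adj_rel (set (e#S)))\<^sup>*"
    by (rule rtrancl_mono) (auto simp: adj_rel_def)
  have A2: "(v, prodT (e#S) v) \<in> (adj_rel (set (e#S)))\<^sup>*" for v
  proof -
    have 1: "(v, ?p v) \<in> (adj_rel (set (e#S)))\<^sup>*" using IH(2) mono by blast
    have "(?p v, Transposition.transpose a b (?p v)) \<in> (adj_rel (set (e#S)))\<^sup>*"
    proof -
      have ab: "(a,b) \<in> adj_rel (set (e#S))" "(b,a) \<in> adj_rel (set (e#S))"
        using e by (auto simp: adj_rel_def insert_commute)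
      show ?thesis
        using ab by (cases "?p v = a"; cases "?p v = b") auto
    qed
    then show ?thesis using 1 P by (simp add: rtrancl_trans)
  qed
  show ?case using A1 A2 by blast
qed


lemma edge_neq: assumes "{i,j} = {x,y}" "x \<noteq> y" shows "i \<noteq> (j::nat)"
proof
  assume "i = j"
  have "x \<in> {i,j}" "y \<in> {i,j}" using assms(1) by simp_all
  then show False using \<open>i = j\<close> assms(2) by simp
qed

lemma edge_mem: assumes "{i,j} = {a,b}" "a \<in> A" "b \<in> A" shows "i \<in> A \<and> j \<in> (A::nat set)"
proof -
  have "i \<in> {a,b}" "j \<in> {a,b}" using assms(1) by (simp_all add: eq_commute[of "{i,j}"])
  then show ?thesis using assms(2,3) by auto
qed

lemma graph_edge_pair:
  assumes "is_graph n E" "{i,j} \<in> E"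
  shows "i \<noteq> j \<and> i \<in> {1..n} \<and> j \<in> {1..n}"
proof -
  obtain a b where ab: "{i,j} = {a,b}" "a \<noteq> b" "a\<in>{1..n}" "b\<in>{1..n}"
    using graph_edge[OF assms] by (elim exE conjE) (rule that)
  show ?thesis using edge_neq[OF ab(1,2)] edge_mem[OF ab(1,3,4)] by simp
qed

lemma nil_subseqs: "[] \<in> set (subseqs xs)"
  by (induction xs) (auto simp: Let_def)

lemma subseqs_set: "S \<in> set (subseqs \<pi>) \<Longrightarrow> set S \<subseteq> set \<pi>"
  using subseqs_powset[of \<pi>] by blast

lemma distinct_subseqs: "distinct \<pi> \<Longrightarrow> distinct (subseqs \<pi>)"
  using distinct_set_subseqs distinct_map by blast

lemma cons_subseqs:
  "x#ys \<in> set (subseqs \<pi>) \<longleftrightarrow> (\<exists>p<length \<pi>. \<pi>!p = x \<and> ys \<in> set (subseqs (drop (Suc p) \<pi>)))"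
proof (induction \<pi>)
  case Nil then show ?case by simp
next
  case (Cons y \<pi>)
  have "x#ys \<in> set (subseqs (y#\<pi>)) \<longleftrightarrow> (x = y \<and> ys \<in> set (subseqs \<pi>)) \<or> x#ys \<in> set (subseqs \<pi>)"
    by (auto simp: Let_def)
  also have "\<dots> \<longleftrightarrow> (\<exists>p<length (y#\<pi>). (y#\<pi>)!p = x \<and> ys \<in> set (subseqs (drop (Suc p) (y#\<pi>))))"
    unfolding Cons.IH
    apply (rule iffI)
     apply (auto)[1]
    apply (elim exE conjE)
    subgoal for p by (cases p) auto
    done
  finally show ?case .
qed

lemma pair_subseqs: "[x,y] \<in> set (subseqs \<pi>) \<longleftrightarrow> precedes x y \<pi>"
proof
  assume "[x,y] \<in> set (subseqs \<pi>)"
  then obtain p q where pq: "p < length \<pi>" "\<pi>!p = x" "q < length (drop (Suc p) \<pi>)" "drop (Suc p) \<pi> ! q = y"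
    unfolding cons_subseqs by auto
  then show "precedes x y \<pi>" unfolding precedes_def
    by (intro exI[of _ p] exI[of _ "Suc p + q"]) auto
next
  assume "precedes x y \<pi>"
  then obtain p q where pq: "p < q" "q < length \<pi>" "\<pi>!p = x" "\<pi>!q = y" unfolding precedes_def by blast
  have "drop (Suc p) \<pi> ! (q - Suc p) = y" using pq by simp
  then show "[x,y] \<in> set (subseqs \<pi>)" unfolding cons_subseqs using pq nil_subseqs
    by (intro exI[of _ p]) (auto intro!: exI[of _ "q - Suc p"])
qed

lemma coef_single:
  assumes "distinct \<pi>" "S0 \<in> set (subseqs \<pi>)" "\<forall>S \<in> set (subseqs \<pi>). prodT S = q \<longrightarrow> S = S0" "prodT S0 = q"
  shows "coef \<pi> q = (-1)^length S0"
proof -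
  let ?f = "\<lambda>S. if q = prodT S then (-1::complex)^length S else 0"
  have "coef \<pi> q = sum ?f (set (subseqs \<pi>))"
    unfolding coef_def by (rule sum_list_distinct_conv_sum_set[OF distinct_subseqs[OF assms(1)]])
  also have "\<dots> = sum (\<lambda>S. if S = S0 then (-1::complex)^length S0 else 0) (set (subseqs \<pi>))"
  proof (rule sum.cong[OF refl])
    fix S assume S: "S \<in> set (subseqs \<pi>)"
    show "?f S = (if S = S0 then (-1::complex)^length S0 else 0)"
    proof (cases "S = S0")
      case True then show ?thesis using assms(4) by simp
    next
      case False
      then have "prodT S \<noteq> q" using assms(3) S by blast
      then show ?thesis using False by simp
    qed
  qed
  also have "\<dots> = (-1)^length S0" using assms(2) by (simp add: sum.delta')
  finally show ?thesis .
qed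

lemma coef_zero:
  assumes "\<forall>S \<in> set (subseqs \<pi>). prodT S \<noteq> q"
  shows "coef \<pi> q = 0"
proof -
  have "\<forall>S\<in>set xs. prodT S \<noteq> q \<Longrightarrow>
     sum_list (map (\<lambda>S. if q = prodT S then (-1::complex)^length S else 0) xs) = 0" for xs
    by (induction xs) auto
  then show ?thesis unfolding coef_def using assms by blast
qed

lemma lemA:
  assumes "is_graph n E" "\<not> has_cycle E" "distinct S" "set S \<subseteq> E" "a \<noteq> b"
    "prodT S = Transposition.transpose a b"
  shows "S = [{a,b}]"
proof -
  have U: "\<Union>(set S) = {a,b}"
    using invariant[OF assms(1-4)] assms(5,6) by (auto simp: transpose_eq_iff)
  have sub: "set S \<subseteq> {{a,b}}"
  proof
    fix e assume "e \<in> set S"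
    then obtain x y where "e = {x,y}" "x \<noteq> y" using graph_edge[OF assms(1)] assms(4) by blast
    moreover have "e \<subseteq> {a,b}" using U \<open>e \<in> set S\<close> by blast
    ultimately show "e \<in> {{a,b}}" by auto
  qed
  have "set S \<noteq> {}" using U by auto
  then have "set S = {{a,b}}" using sub subset_singletonD by metis
  then have "length S = 1" using distinct_card[OF assms(3)] by simp
  then obtain z where "S = [z]" by (cases S) auto
  then show ?thesis using \<open>set S = {{a,b}}\<close> by simp
qed

lemma lemB:
  assumes "is_graph n E" "\<not> has_cycle E" "distinct S" "set S \<subseteq> E"
    "{i,j} \<in> E" "{j,k} \<in> E" "{i,j} \<noteq> {j,k}"
    "prodT S = Transposition.transpose i j \<circ> Transposition.transpose j k"
  shows "S = [{i,j},{j,k}]"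
proof -
  have ij: "i \<noteq> j"
    using graph_edge_pair[OF assms(1) assms(5)] by simp
  have jk: "j \<noteq> k"
    using graph_edge_pair[OF assms(1) assms(6)] by simp
  have ik: "i \<noteq> k"
  proof
    assume "i = k"
    then show False using assms(7) by (simp add: insert_commute)
  qed
  let ?q = "Transposition.transpose i j \<circ> Transposition.transpose j k"
  have qi: "?q i = j" using ij jk ik by simp
  have qj: "?q j = k" using ij jk ik by simp
  have qk: "?q k = i" using ij jk ik by simp
  have qv: "v \<notin> {i,j,k} \<Longrightarrow> ?q v = v" for v by simp
  have M: "{v. ?q v \<noteq> v} = {i,j,k}"
  proof (rule set_eqI)
    fix v
    have "?q v \<noteq> v \<longleftrightarrow> v \<in> {i,j,k}"
    proof (cases "v \<in> {i,j,k}")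
      case True
      then consider "v = i" | "v = j" | "v = k" by blast
      then have "?q v \<noteq> v"
      proof cases
        case 1 then show ?thesis using qi ij by (simp only:)
      next
        case 2 then show ?thesis using qj jk by (simp only:)
      next
        case 3 then show ?thesis using qk ik by (simp only:) simp
      qed
      then show ?thesis using True by blast
    next
      case False
      then show ?thesis using qv[OF False] by blast
    qed
    then show "v \<in> {v. ?q v \<noteq> v} \<longleftrightarrow> v \<in> {i,j,k}" by (simp only: mem_Collect_eq)
  qed
  have U: "\<Union>(set S) = {i,j,k}"
    using invariant[OF assms(1-4)] assms(8) M by simp
  have nik: "{i,k} \<notin> E"
  proof
    assume "{i,k} \<in> E"
    have "has_cycle E" unfolding has_cycle_def
    proof (intro exI[of _ "[i,j,k]"] conjI allI impI)
      fix m assume "m < length [i,j,k]"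
      then have "m = 0 \<or> m = 1 \<or> m = 2" by auto
      then show "{[i,j,k] ! m, [i,j,k] ! ((m + 1) mod length [i,j,k])} \<in> E"
      proof -
        have "{k,i} = {i,k}" by (rule insert_commute)
        then have "{k,i} \<in> E" using \<open>{i,k} \<in> E\<close> by (simp only:)
        then show ?thesis using \<open>m = 0 \<or> m = 1 \<or> m = 2\<close> assms(5,6) by auto
      qed
    qed (use ij jk ik in auto)
    then show False using assms(2) by simp
  qed
  have sub: "set S \<subseteq> {{i,j},{j,k}}"
  proof
    fix e assume e: "e \<in> set S"
    then obtain x y where xy: "e = {x,y}" "x \<noteq> y" using graph_edge[OF assms(1)] assms(4) by blast
    have "e \<subseteq> {i,j,k}" using U e by blast
    then have "x \<in> {i,j,k}" "y \<in> {i,j,k}" using xy by auto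
    then have "e = {i,j} \<or> e = {j,k} \<or> e = {i,k}" using xy by (auto simp: doubleton_eq_iff)
    then show "e \<in> {{i,j},{j,k}}" using nik e assms(4) by blast
  qed
  have "{i,j} \<in> set S"
  proof (rule ccontr)
    assume "{i,j} \<notin> set S"
    then have "set S \<subseteq> {{j,k}}" using sub by blast
    then have "i \<notin> \<Union>(set S)" using ij ik by blast
    then show False using U by blast
  qed
  moreover have "{j,k} \<in> set S"
  proof (rule ccontr)
    assume "{j,k} \<notin> set S"
    then have "set S \<subseteq> {{i,j}}" using sub by blast
    then have "k \<notin> \<Union>(set S)" using jk ik by blast
    then show False using U by blast
  qed
  ultimately have SS: "set S = {{i,j},{j,k}}" using sub by blast
  then have "length S = 2" using distinct_card[OF assms(3)] assms(7) by simp
  then obtain x y where S: "S = [x,y]" by (cases S; cases "tl S") auto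
  then have "(x = {i,j} \<and> y = {j,k}) \<or> (x = {j,k} \<and> y = {i,j})" using SS
    by (simp add: doubleton_eq_iff)
  moreover have "\<not> (x = {j,k} \<and> y = {i,j})"
  proof
    assume "x = {j,k} \<and> y = {i,j}"
    then have "prodT S = Transposition.transpose j k \<circ> Transposition.transpose i j"
      using S ij jk by (simp add: prodT_def edge_transp_pair)
    then have "Transposition.transpose j k (Transposition.transpose i j i)
       = Transposition.transpose i j (Transposition.transpose j k i)"
      using assms(8) by (metis comp_apply)
    then show False using ij jk ik by simp
  qed
  ultimately show ?thesis using S by simp
qed


lemma edge_ok:
  assumes "is_graph n E" "e \<in> E"
  shows "edge_transp e \<in> Sn n \<and> edge_transp e \<circ> edge_transp e = id"
proof -
  obtain a b where ab: "e = {a,b}" "a\<noteq>b" "a\<in>{1..n}" "b\<in>{1..n}" using graph_edge[OF assms] by blast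
  then show ?thesis by (simp add: edge_transp_pair Sn_def permutes_swap_id)
qed

lemma Kpi_eval:
  assumes "is_graph n E" "edge_ordering E \<pi>"
  shows "Kpi n \<pi> = (\<lambda>s. of_nat (fact n) * (if s \<in> Sn n then coef \<pi> s else 0))"
proof -
  have "\<forall>e\<in>set \<pi>. edge_transp e \<in> Sn n \<and> edge_transp e \<circ> edge_transp e = id"
    using edge_ok[OF assms(1)] assms(2) by (auto simp: edge_ordering_def)
  then show ?thesis unfolding Kpi_def ga_scale_def using ga_expand by simp
qed

lemma coef_eq:
  assumes "is_graph n E1" "is_graph n E2" "edge_ordering E1 \<pi>1" "edge_ordering E2 \<pi>2"
    "Kpi n \<pi>1 = Kpi n \<pi>2" "s \<in> Sn n"
  shows "coef \<pi>1 s = coef \<pi>2 s"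
proof -
  have "of_nat (fact n) * coef \<pi>1 s = (of_nat (fact n) :: complex) * coef \<pi>2 s"
    using fun_cong[OF assms(5), of s] Kpi_eval[OF assms(1,3)] Kpi_eval[OF assms(2,4)] assms(6) by simp
  moreover have "(of_nat (fact n) :: complex) \<noteq> 0" by simp
  ultimately show ?thesis by simp
qed

lemma edges_sub:
  assumes "is_tree n E1" "is_tree n E2" "edge_ordering E1 \<pi>1" "edge_ordering E2 \<pi>2"
    "\<forall>s\<in>Sn n. coef \<pi>1 s = coef \<pi>2 s"
  shows "E1 \<subseteq> E2"
proof
  fix e assume e: "e \<in> E1"
  have g1: "is_graph n E1" "\<not> has_cycle E1" and g2: "is_graph n E2" "\<not> has_cycle E2"
    using assms(1,2) by (auto simp: is_tree_def)
  have d1: "distinct \<pi>1" "set \<pi>1 = E1" and d2: "distinct \<pi>2" "set \<pi>2 = E2"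
    using assms(3,4) by (auto simp: edge_ordering_def)
  obtain a b where ab: "e = {a,b}" "a\<noteq>b" "a\<in>{1..n}" "b\<in>{1..n}" using graph_edge[OF g1(1) e] by blast
  let ?q = "Transposition.transpose a b"
  have qS: "?q \<in> Sn n" using ab by (simp add: Sn_def permutes_swap_id)
  obtain p where p: "p < length \<pi>1" "\<pi>1 ! p = e" using e d1 by (metis in_set_conv_nth)
  have in1: "[e] \<in> set (subseqs \<pi>1)" unfolding cons_subseqs using p nil_subseqs by blast
  have pe: "prodT [e] = ?q" using ab by (simp add: prodT_def edge_transp_pair)
  have "coef \<pi>1 ?q = (-1)^length [e]"
  proof (rule coef_single[OF d1(1) in1 _ pe], intro ballI impI)
    fix S assume S: "S \<in> set (subseqs \<pi>1)" "prodT S = ?q"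
    have "S = [{a,b}]"
      using lemA[OF g1 subseqs_distinctD[OF S(1) d1(1)] _ ab(2) S(2)] subseqs_set[OF S(1)] d1(2) by simp
    then show "S = [e]" using ab by simp
  qed
  then have "coef \<pi>2 ?q \<noteq> 0" using assms(5) qS by simp
  then obtain S where S: "S \<in> set (subseqs \<pi>2)" "prodT S = ?q" using coef_zero by blast
  have "S = [{a,b}]"
    using lemA[OF g2 subseqs_distinctD[OF S(1) d2(1)] _ ab(2) S(2)] subseqs_set[OF S(1)] d2(2) by simp
  then show "e \<in> E2" using subseqs_set[OF S(1)] d2(2) ab by simp
qed

theorem mainTheorem7:
  fixes n :: nat and E1 E2 :: "nat set set" and \<pi>1 \<pi>2 :: "nat set list"
  assumes "is_tree n E1" and "is_tree n E2"
    and "edge_ordering E1 \<pi>1" and "edge_ordering E2 \<pi>2"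
    and "Kpi n \<pi>1 = Kpi n \<pi>2"
  shows "E1 = E2 \<and>
    (\<forall>i j k. {i, j} \<in> E1 \<longrightarrow> {j, k} \<in> E1 \<longrightarrow> {i, j} \<noteq> {j, k} \<longrightarrow>
       precedes {i, j} {j, k} \<pi>1 \<longrightarrow> precedes {i, j} {j, k} \<pi>2)"
proof -
  have g1: "is_graph n E1" "\<not> has_cycle E1" and g2: "is_graph n E2" "\<not> has_cycle E2"
    using assms(1,2) by (auto simp: is_tree_def)
  have d1: "distinct \<pi>1" "set \<pi>1 = E1" and d2: "distinct \<pi>2" "set \<pi>2 = E2"
    using assms(3,4) by (auto simp: edge_ordering_def)
  have C: "\<forall>s\<in>Sn n. coef \<pi>1 s = coef \<pi>2 s"
    using coef_eq[OF g1(1) g2(1) assms(3,4,5)] by blast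
  have C': "\<forall>s\<in>Sn n. coef \<pi>2 s = coef \<pi>1 s" using C by simp
  have EE: "E1 = E2"
    by (rule equalityI[OF edges_sub[OF assms(1-4) C] edges_sub[OF assms(2,1,4,3) C']])
  show ?thesis
  proof (intro conjI EE allI impI)
    fix i j k assume ij: "{i,j} \<in> E1" and jk: "{j,k} \<in> E1" and ne: "{i,j} \<noteq> {j,k}"
      and pr: "precedes {i, j} {j, k} \<pi>1"
    have P1: "i \<noteq> j \<and> i \<in> {1..n} \<and> j \<in> {1..n}" using graph_edge_pair[OF g1(1) ij] .
    have P2: "j \<noteq> k \<and> j \<in> {1..n} \<and> k \<in> {1..n}" using graph_edge_pair[OF g1(1) jk] .
    have ijn: "i \<noteq> j" using P1 by simp
    have jkn: "j \<noteq> k" using P2 by simp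
    let ?q = "Transposition.transpose i j \<circ> Transposition.transpose j k"
    have qS: "?q \<in> Sn n" unfolding Sn_def using P1 P2 by (intro CollectI permutes_compose permutes_swap_id) auto
    let ?S0 = "[{i,j},{j,k}]"
    have in1: "?S0 \<in> set (subseqs \<pi>1)" by (rule pair_subseqs[of "{i,j}" "{j,k}" \<pi>1, THEN iffD2, OF pr])
    have pe: "prodT ?S0 = ?q" using ijn jkn by (simp add: prodT_def edge_transp_pair)
    have c1: "coef \<pi>1 ?q = (-1)^length ?S0"
    proof (rule coef_single[OF d1(1) in1 _ pe], intro ballI impI)
      fix S assume S: "S \<in> set (subseqs \<pi>1)" "prodT S = ?q"
      have "set S \<subseteq> E1" using subseqs_set[OF S(1)] d1(2) by simp
      then show "S = ?S0" by (rule lemB[OF g1 subseqs_distinctD[OF S(1) d1(1)] _ ij jk ne S(2)])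
    qed
    have "coef \<pi>1 ?q = coef \<pi>2 ?q" by (rule bspec[OF C qS])
    then have nz: "coef \<pi>2 ?q \<noteq> 0" using c1 by simp
    have "\<not> (\<forall>S\<in>set (subseqs \<pi>2). prodT S \<noteq> ?q)"
    proof
      assume "\<forall>S\<in>set (subseqs \<pi>2). prodT S \<noteq> ?q"
      from coef_zero[OF this] nz show False by simp
    qed
    then obtain S where S: "S \<in> set (subseqs \<pi>2)" "prodT S = ?q" by blast
    have ij2: "{i,j} \<in> E2" using ij EE by simp
    have jk2: "{j,k} \<in> E2" using jk EE by simp
    have "set S \<subseteq> E2" using subseqs_set[OF S(1)] d2(2) by simp
    then have "S = ?S0" by (rule lemB[OF g2 subseqs_distinctD[OF S(1) d2(1)] _ ij2 jk2 ne S(2)])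
    then show "precedes {i, j} {j, k} \<pi>2" using pair_subseqs[of "{i,j}" "{j,k}" \<pi>2] S(1) by simp
  qed
qed

end
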